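(* Let $a,b\in\mathbb{Q}_3$ with $\gamma(a)=\gamma(b)=-m<0$ ($m>0$). Then $x=\sum_{k\ge0}x_k3^k\in\mathbb{Z}_3^*$ is a solution of $x^3+ax=b$ if and only if the congruences $$a_0x_0\equiv b_0\pmod 3,$$ $$x_ka_0+x_{k-1}a_1+\dots+x_0a_k+M_k(x_0,\dots,x_{k-1})\equiv b_k\pmod3,\quad 1\le k\le m-1,$$ $$x_ma_0+x_{m-1}a_1+\dots+x_0a_m+x_0^3+M_m(x_0,\dots,x_{m-1})\equiv b_m\pmod3,$$ $$x_{m+1}a_0+x_ma_1+\dots+x_0a_{m+1}+M_{m+1}(x_0,\dots,x_m)\equiv b_{m+1}\pmod3,$$ $$x_ka_0+x_{k-1}a_1+\dots+x_0a_k+x_0^2x_{k-m-1}+N_{k-m}(x_0,\dots,x_{k-m-1})+M_k(x_0,\dots,x_{k-1})\equiv b_k\pmod3,\quad k\ge m+2,$$ are fulfilled, where the integers $M_k(x_0,\dots,x_{k-1})$ are defined successively by $$a_0x_0=b_0+3M_1(x_0),$$ $$x_ka_0+\dots+x_0a_k=b_k-M_k(x_0,\dots,x_{k-1})+3M_{k+1}(x_0,\dots,x_k),\quad1\le k\le m-1,$$ $$x_ma_0+\dots+x_0a_m+x_0^3=b_m-M_m(x_0,\dots,x_{m-1})+3M_{m+1}(x_0,\dots,x_m),$$ $$x_{m+1}a_0+\dots+x_0a_{m+1}=b_{m+1}-M_{m+1}(x_0,\dots,x_m)+3M_{m+2}(x_0,\dots,x_{m+1}),$$ $$x_ka_0+\dots+x_0a_k+x_0^2x_{k-m-1}+N_{k-m}(x_0,\dots,x_{k-m-1})=b_k-M_k(x_0,\dots,x_{k-1})+3M_{k+1}(x_0,\dots,x_k),\quad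 k\ge m+2.$$
   Context: Write $a=3^{\gamma(a)}(a_0+a_13+a_23^2+\dots)$, $b=3^{\gamma(b)}(b_0+b_13+b_23^2+\dots)$ in canonical form, with digits $a_j,b_j\in\{0,1,2\}$, $a_0,b_0\ne0$, $\gamma(a),\gamma(b)\in\mathbb{Z}$. $\mathbb{Z}_3^*$ is the set of $3$-adic units; $x\in\mathbb{Z}_3^*$ is written $x=x_0+x_13+x_23^2+\dots$ with $x_j\in\{0,1,2\}$, $x_0\ne0$. For $k\ge1$, $N_k(x_0,\dots,x_{k-1})=\sum \frac{3!}{m_0!\cdots m_{k-1}!}x_0^{m_0}\cdots x_{k-1}^{m_{k-1}}$, the sum over nonnegative integers $m_0,\dots,m_{k-1}$ with $\sum_{i=0}^{k-1}m_i=3$ and $\sum_{i=1}^{k-1}im_i=k$; in particular $N_1=0$. *)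

theory Defs
  imports Main "HOL-Library.FuncSet" "HOL-Number_Theory.Cong"
begin

text \<open>A 3-adic digit sequence d represents the 3-adic integer sum_j d j * 3^j.
  Its truncation modulo 3^n is the partial sum below.\<close>
definition trunc3 :: "(nat \<Rightarrow> int) \<Rightarrow> nat \<Rightarrow> int" where
  "trunc3 d n = (\<Sum>j<n. d j * 3 ^ j)"

definition digits3 :: "(nat \<Rightarrow> int) \<Rightarrow> bool" where
  "digits3 d \<longleftrightarrow> (\<forall>j. d j \<in> {0, 1, 2})"

text \<open>Let a = 3^(-m) * (sum a_j 3^j), b = 3^(-m) * (sum b_j 3^j), x = sum x_j 3^j.
  Then x^3 + a x = b in Q_3 iff 3^m x^3 + A x = B in Z_3 (A, B the unit parts),
  and equality in Z_3 = inverse limit of Z/3^n Z means congruence of all truncations.\<close>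
definition cubic_sol3 :: "nat \<Rightarrow> (nat \<Rightarrow> int) \<Rightarrow> (nat \<Rightarrow> int) \<Rightarrow> (nat \<Rightarrow> int) \<Rightarrow> bool" where
  "cubic_sol3 m a b x \<longleftrightarrow>
     (\<forall>n. [3 ^ m * (trunc3 x n) ^ 3 + trunc3 a n * trunc3 x n = trunc3 b n] (mod 3 ^ n))"

definition Npoly :: "nat \<Rightarrow> (nat \<Rightarrow> int) \<Rightarrow> int" where
  "Npoly k x = (\<Sum>mm \<in> {mm \<in> {..<k} \<rightarrow>\<^sub>E {0..3::nat}.
        (\<Sum>i<k. mm i) = 3 \<and> (\<Sum>i\<in>{1..<k}. i * mm i) = k}.
      int (fact 3 div (\<Prod>i<k. fact (mm i))) * (\<Prod>i<k. x i ^ mm i))"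

definition conv3 :: "(nat \<Rightarrow> int) \<Rightarrow> (nat \<Rightarrow> int) \<Rightarrow> nat \<Rightarrow> int" where
  "conv3 a x k = (\<Sum>i\<le>k. x (k - i) * a i)"

definition Slhs :: "nat \<Rightarrow> (nat \<Rightarrow> int) \<Rightarrow> (nat \<Rightarrow> int) \<Rightarrow> nat \<Rightarrow> int" where
  "Slhs m a x k = conv3 a x k
     + (if k = m then x 0 ^ 3 else 0)
     + (if k \<ge> m + 2 then x 0 ^ 2 * x (k - m - 1) + Npoly (k - m) x else 0)"

fun Mcarry :: "nat \<Rightarrow> (nat \<Rightarrow> int) \<Rightarrow> (nat \<Rightarrow> int) \<Rightarrow> (nat \<Rightarrow> int) \<Rightarrow> nat \<Rightarrow> int" where
  "Mcarry m a b x 0 = 0"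
| "Mcarry m a b x (Suc k) = (Slhs m a x k - b k + Mcarry m a b x k) div 3"

end

theory Submission
  imports Defs "HOL-Combinatorics.Multiset_Permutations"
begin

definition repm :: "nat set \<Rightarrow> (nat \<Rightarrow> nat) \<Rightarrow> nat multiset" where
  "repm U mm = (\<Sum>t\<in>U. replicate_mset (mm t) t)"

lemma count_repm: "finite U \<Longrightarrow> count (repm U mm) s = (if s \<in> U then mm s else 0)"
  unfolding repm_def by (simp add: count_sum count_replicate_mset sum.delta)

lemma size_repm: "size (repm U mm) = (\<Sum>t\<in>U. mm t)"
  unfolding repm_def by (simp add: size_multiset_sum)

lemma summ_repm: "finite U \<Longrightarrow> sum_mset (repm U mm) = (\<Sum>t\<in>U. t * mm t)"
  unfolding repm_def by (induction U rule: finite_induct) (auto simp: sum_mset_replicate_mset)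

lemma prodm_repm: "finite U \<Longrightarrow> prod_mset (image_mset (x::nat\<Rightarrow>int) (repm U mm)) = (\<Prod>t\<in>U. x t ^ mm t)"
  unfolding repm_def by (induction U rule: finite_induct) auto

lemma set_repm: "finite U \<Longrightarrow> set_mset (repm U mm) \<subseteq> U"
  using count_repm by (metis count_eq_zero_iff subsetI)

lemma repm_count: "finite U \<Longrightarrow> set_mset M \<subseteq> U \<Longrightarrow> repm U (count M) = M"
  by (rule multiset_eqI) (auto simp: count_repm count_eq_zero_iff)

lemma sum_from1: "(\<Sum>i\<in>{1..<k}. i * (f i::nat)) = (\<Sum>i<k. i * f i)"
  by (rule sum.mono_neutral_left) auto

lemma Npoly_lists:
  "Npoly k x = (\<Sum>xs\<in>{xs. set xs \<subseteq> {..<k} \<and> length xs = 3 \<and> sum_list xs = k}. prod_list (map x xs))"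
proof -
  define U where "U = {..<k}"
  define L where "L = {xs. set xs \<subseteq> U \<and> length xs = 3 \<and> sum_list xs = k}"
  define T where "T = {M. set_mset M \<subseteq> U \<and> size M = 3 \<and> sum_mset M = k}"
  define S where "S = {mm \<in> U \<rightarrow>\<^sub>E {0..3::nat}. (\<Sum>i\<in>U. mm i) = 3 \<and> (\<Sum>i\<in>U. i * mm i) = k}"
  have finU: "finite U" unfolding U_def by simp
  have finL: "finite L"
    by (rule finite_subset[OF _ finite_lists_length_eq[OF finU, of 3]]) (auto simp: L_def)
  have imgL: "mset ` L = T"
  proof
    show "mset ` L \<subseteq> T" by (auto simp: L_def T_def sum_mset_sum_list)
    show "T \<subseteq> mset ` L"
    proof
      fix M assume "M \<in> T"
      obtain xs where "mset xs = M" using ex_mset by blast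
      then show "M \<in> mset ` L" using \<open>M \<in> T\<close>
        by (auto simp: L_def T_def simp flip: sum_mset_sum_list intro!: image_eqI[of _ _ xs])
    qed
  qed
  have "(\<Sum>xs\<in>L. prod_list (map x xs)) = (\<Sum>M\<in>T. \<Sum>xs\<in>{xs\<in>L. mset xs = M}. prod_list (map x xs))"
    using sum.image_gen[OF finL, of "\<lambda>xs. prod_list (map x xs)" mset] imgL by simp
  also have "\<dots> = (\<Sum>M\<in>T. int (card (permutations_of_multiset M)) * prod_mset (image_mset x M))"
  proof (rule sum.cong[OF refl])
    fix M assume "M \<in> T"
    have e: "{xs\<in>L. mset xs = M} = permutations_of_multiset M"
      using \<open>M \<in> T\<close> by (auto simp: L_def T_def permutations_of_multiset_def simp flip: sum_mset_sum_list)
    have "(\<Sum>xs\<in>{xs\<in>L. mset xs = M}. prod_list (map x xs)) = (\<Sum>xs\<in>permutations_of_multiset M. prod_mset (image_mset x M))"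
      unfolding e by (rule sum.cong[OF refl]) (auto simp: permutations_of_multiset_def simp flip: prod_mset_prod_list)
    then show "(\<Sum>xs\<in>{xs\<in>L. mset xs = M}. prod_list (map x xs)) = int (card (permutations_of_multiset M)) * prod_mset (image_mset x M)"
      by simp
  qed
  also have "\<dots> = Npoly k x"
    unfolding Npoly_def U_def[symmetric] sum_from1 S_def[symmetric]
  proof (rule sym, rule sum.reindex_bij_witness[where i="\<lambda>M. restrict (count M) U" and j="repm U"])
    fix mm assume "mm \<in> S"
    then show "restrict (count (repm U mm)) U = mm"
      by (auto simp: S_def count_repm[OF finU] PiE_def extensional_def)
    show "repm U mm \<in> T" using \<open>mm \<in> S\<close>
      by (simp add: T_def S_def set_repm[OF finU] size_repm summ_repm[OF finU] mult.commute)
    have pf: "(\<Prod>t\<in>U. fact (mm t)) = (\<Prod>t\<in>set_mset (repm U mm). fact (count (repm U mm) t))"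
    proof (rule prod.mono_neutral_cong_right)
      show "finite U" by (rule finU)
      show "set_mset (repm U mm) \<subseteq> U" by (rule set_repm[OF finU])
      show "\<forall>i\<in>U - set_mset (repm U mm). fact (mm i) = 1"
        using count_repm[OF finU, of mm] by (metis DiffE count_eq_zero_iff fact_0)
      show "\<And>t. t \<in> set_mset (repm U mm) \<Longrightarrow> fact (mm t) = fact (count (repm U mm) t)"
        using count_repm[OF finU, of mm] set_repm[OF finU, of mm] by auto
    qed
    show "int (card (permutations_of_multiset (repm U mm))) * prod_mset (image_mset x (repm U mm)) =
         int (fact 3 div (\<Prod>t\<in>U. fact (mm t))) * (\<Prod>t\<in>U. x t ^ mm t)"
      using \<open>mm \<in> S\<close> by (simp add: card_permutations_of_multiset(1) pf prodm_repm[OF finU] size_repm S_def)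
  next
    fix M assume "M \<in> T"
    then have sub: "set_mset M \<subseteq> U" by (simp add: T_def)
    have r: "restrict (count M) U t = count M t" if "t \<in> U" for t using that by simp
    show "repm U (restrict (count M) U) = M"
      by (rule multiset_eqI) (auto simp: count_repm[OF finU] count_eq_zero_iff dest: subsetD[OF sub])
    then have M: "M = repm U (restrict (count M) U)" by simp
    have "size M = (\<Sum>t\<in>U. restrict (count M) U t)" by (subst M, simp add: size_repm)
    moreover have "sum_mset M = (\<Sum>t\<in>U. t * restrict (count M) U t)" by (subst M, simp add: summ_repm[OF finU])
    moreover have "count M t \<le> 3" for t using count_le_size[of M t] \<open>M \<in> T\<close> by (simp add: T_def)
    ultimately show "restrict (count M) U \<in> S" using \<open>M \<in> T\<close> by (auto simp: S_def T_def mult.commute)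
  qed
  finally show ?thesis unfolding L_def U_def by simp
qed

lemma len3: "length xs = 3 \<Longrightarrow> \<exists>a b c. xs = [a,b,c]"
  by (auto simp: numeral_3_eq_3 length_Suc_conv)

lemma triple_lists:
  assumes "finite A"
  shows "(\<Sum>xs | set xs \<subseteq> A \<and> length xs = 3. F xs) = (\<Sum>i\<in>A. \<Sum>j\<in>A. \<Sum>l\<in>A. F [i,j,l])"
proof -
  have "(\<Sum>i\<in>A. \<Sum>j\<in>A. \<Sum>l\<in>A. F [i,j,l]) = (\<Sum>(i,j,l)\<in>A \<times> A \<times> A. F [i,j,l])"
    by (simp add: sum.cartesian_product)
  also have "\<dots> = (\<Sum>xs | set xs \<subseteq> A \<and> length xs = 3. F xs)"
  proof (rule sum.reindex_bij_witness[where j="\<lambda>(i,j,l). [i,j,l]" and i="\<lambda>xs. (xs!0, xs!1, xs!2)"])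
    fix xs assume "xs \<in> {xs. set xs \<subseteq> A \<and> length xs = 3}"
    then obtain a b c where "xs = [a,b,c]" "a \<in> A" "b \<in> A" "c \<in> A" using len3 by force
    then show "(case (xs!0, xs!1, xs!2) of (i,j,l) \<Rightarrow> [i,j,l]) = xs" "(xs!0, xs!1, xs!2) \<in> A \<times> A \<times> A"
      by auto
  qed auto
  finally show ?thesis by simp
qed

lemma prod3: "prod_list (map x [i,j,l]) = x i * x j * (x l :: int)" by simp
lemma sum3: "sum_list [i,j,l] = i + (j + (l::nat))" by simp

definition tri :: "(nat \<Rightarrow> int) \<Rightarrow> nat \<Rightarrow> int" where
  "tri x k = (\<Sum>i\<le>k. \<Sum>j\<le>k. \<Sum>l\<le>k. if i+j+l = k then x i * x j * x l else 0)"

lemma tri_0: "tri x 0 = x 0 ^ 3"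
  by (simp add: tri_def power3_eq_cube)

lemma tri_Npoly:
  assumes "k \<ge> 1"
  shows "tri x k = 3 * x 0 ^ 2 * x k + Npoly k x"
proof -
  define L' where "L' = {xs. set xs \<subseteq> {..k} \<and> length xs = 3 \<and> sum_list xs = k}"
  define L where "L = {xs. set xs \<subseteq> {..<k} \<and> length xs = 3 \<and> sum_list xs = k}"
  define E where "E = {[k,0,0],[0,k,0],[0,0,k::nat]}"
  have fin: "finite {xs. set xs \<subseteq> {..k} \<and> length xs = 3}" by (rule finite_lists_length_eq) simp
  have "tri x k = (\<Sum>xs | set xs \<subseteq> {..k} \<and> length xs = 3. if sum_list xs = k then prod_list (map x xs) else 0)"
    unfolding tri_def by (subst triple_lists) (simp_all only: prod3 sum3 add.assoc finite_atMost)
  also have "\<dots> = (\<Sum>xs\<in>L'. prod_list (map x xs))"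
    unfolding L'_def by (subst sum.inter_filter[symmetric, OF fin]) (simp add: conj_assoc)
  also have "L' = L \<union> E"
  proof
    show "L \<union> E \<subseteq> L'" by (auto simp: L_def L'_def E_def)
    show "L' \<subseteq> L \<union> E"
    proof
      fix xs assume "xs \<in> L'"
      then obtain a b c where xs: "xs = [a,b,c]" and abc: "a \<le> k" "b \<le> k" "c \<le> k" "a+b+c = k"
        using len3 unfolding L'_def by force
      show "xs \<in> L \<union> E"
      proof (cases "a = k \<or> b = k \<or> c = k")
        case True then show ?thesis using abc by (auto simp: xs E_def)
      next
        case False then show ?thesis using abc by (auto simp: xs L_def)
      qed
    qed
  qed
  also have "(\<Sum>xs\<in>L \<union> E. prod_list (map x xs)) = (\<Sum>xs\<in>L. prod_list (map x xs)) + (\<Sum>xs\<in>E. prod_list (map x xs))"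
  proof (rule sum.union_disjoint)
    show "finite L" by (rule finite_subset[OF _ fin]) (auto simp: L_def)
    show "finite E" by (simp add: E_def)
    show "L \<inter> E = {}" by (auto simp: L_def E_def)
  qed
  also have "(\<Sum>xs\<in>E. prod_list (map x xs)) = 3 * x 0 ^ 2 * x k"
    using assms by (simp add: E_def power2_eq_square algebra_simps)
  finally show ?thesis using Npoly_lists[of k x] unfolding L_def by simp
qed

lemma Npoly_1: "Npoly 1 x = 0"
  by (simp add: Npoly_def)

lemma Npoly_Suc0: "Npoly (Suc 0) x = 0"
  using Npoly_1 by simp

lemma ext_le_less: "(k::nat) < N \<Longrightarrow> (\<And>i. k < i \<Longrightarrow> f i = 0) \<Longrightarrow> sum f {..k} = sum f {..<N}"
proof (rule sum.mono_neutral_left)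
  assume a: "k < N" "\<And>i. k < i \<Longrightarrow> f i = 0"
  then show "finite {..<N}" "{..k} \<subseteq> {..<N}" by auto
  show "\<forall>i\<in>{..<N} - {..k}. f i = 0" using a(2) by (auto simp: not_le)
qed

lemma tri_ext:
  assumes "k < N"
  shows "tri x k = (\<Sum>i<N. \<Sum>j<N. \<Sum>l<N. if i+j+l = k then x i * x j * x l else 0)"
proof -
  define g where "g i j l = (if i+j+l = k then x i * x j * x l else 0)" for i j l
  have 1: "(\<Sum>l\<le>k. g i j l) = (\<Sum>l<N. g i j l)" for i j
    by (rule ext_le_less[OF assms]) (auto simp: g_def)
  have 2: "(\<Sum>j\<le>k. \<Sum>l<N. g i j l) = (\<Sum>j<N. \<Sum>l<N. g i j l)" for i
    by (rule ext_le_less[OF assms]) (auto simp: g_def intro!: sum.neutral)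
  have 3: "(\<Sum>i\<le>k. \<Sum>j<N. \<Sum>l<N. g i j l) = (\<Sum>i<N. \<Sum>j<N. \<Sum>l<N. g i j l)"
    by (rule ext_le_less[OF assms]) (auto simp: g_def intro!: sum.neutral)
  show ?thesis unfolding tri_def g_def[symmetric] 1 2 3 ..
qed

lemma conv_ext:
  assumes "k < N"
  shows "conv3 a x k = (\<Sum>i<N. \<Sum>j<N. if i+j = k then a i * x j else 0)"
proof -
  have 1: "(\<Sum>j<N. if i+j = k then a i * x j else 0) = (if i \<le> k then x (k-i) * a i else 0)" for i
  proof -
    have "(\<Sum>j<N. if i+j = k then a i * x j else 0) = (\<Sum>j<N. if j = k - i then (if i \<le> k then a i * x j else 0) else 0)"
      by (rule sum.cong) auto
    also have "\<dots> = (if i \<le> k then x (k-i) * a i else 0)" using assms by (auto simp: sum.delta)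
    finally show ?thesis .
  qed
  have "(\<Sum>i<N. \<Sum>j<N. if i+j = k then a i * x j else 0) = (\<Sum>i<N. if i \<le> k then x (k-i) * a i else 0)"
    unfolding 1 ..
  also have "\<dots> = (\<Sum>i\<le>k. if i \<le> k then x (k-i) * a i else 0)"
    by (rule ext_le_less[OF assms, symmetric]) auto
  finally show ?thesis unfolding conv3_def by simp
qed

lemma tail_cong:
  "[(\<Sum>k<n+d. f k * 3^k) = (\<Sum>k<n. f k * 3^k)] (mod (3::int)^n)"
proof (induction d)
  case (Suc d)
  have "[f (n+d) * 3^(n+d) = 0] (mod (3::int)^n)"
    by (simp add: cong_0_iff power_add)
  from cong_add[OF Suc.IH this] show ?case by simp
qed simp

lemma swap4: "(\<Sum>i\<in>A. \<Sum>j\<in>B. \<Sum>l\<in>C. \<Sum>k\<in>D. g i j l k) = (\<Sum>k\<in>D. \<Sum>i\<in>A. \<Sum>j\<in>B. \<Sum>l\<in>C. g i j l k)"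
proof -
  have "(\<Sum>i\<in>A. \<Sum>j\<in>B. \<Sum>l\<in>C. \<Sum>k\<in>D. g i j l k) = (\<Sum>i\<in>A. \<Sum>j\<in>B. \<Sum>k\<in>D. \<Sum>l\<in>C. g i j l k)"
    by (rule sum.cong[OF refl], rule sum.cong[OF refl], rule sum.swap)
  also have "\<dots> = (\<Sum>i\<in>A. \<Sum>k\<in>D. \<Sum>j\<in>B. \<Sum>l\<in>C. g i j l k)"
    by (rule sum.cong[OF refl], rule sum.swap)
  also have "\<dots> = (\<Sum>k\<in>D. \<Sum>i\<in>A. \<Sum>j\<in>B. \<Sum>l\<in>C. g i j l k)"
    by (rule sum.swap)
  finally show ?thesis .
qed

lemma swap3: "(\<Sum>i\<in>A. \<Sum>j\<in>B. \<Sum>k\<in>D. g i j k) = (\<Sum>k\<in>D. \<Sum>i\<in>A. \<Sum>j\<in>B. g i j k)"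
proof -
  have "(\<Sum>i\<in>A. \<Sum>j\<in>B. \<Sum>k\<in>D. g i j k) = (\<Sum>i\<in>A. \<Sum>k\<in>D. \<Sum>j\<in>B. g i j k)"
    by (rule sum.cong[OF refl], rule sum.swap)
  also have "\<dots> = (\<Sum>k\<in>D. \<Sum>i\<in>A. \<Sum>j\<in>B. g i j k)"
    by (rule sum.swap)
  finally show ?thesis .
qed

lemma K1: "[trunc3 x n ^ 3 = (\<Sum>k<n. tri x k * 3^k)] (mod 3^n)"
proof -
  have "trunc3 x n ^ 3 = (\<Sum>i<n. \<Sum>j<n. \<Sum>l<n. x i * x j * x l * 3^(i+j+l))"
    unfolding trunc3_def power3_eq_cube sum_distrib_left sum_distrib_right
    by (simp add: power_add algebra_simps)
  also have "[\<dots> = (\<Sum>i<n. \<Sum>j<n. \<Sum>l<n. if i+j+l < n then x i * x j * x l * 3^(i+j+l) else 0)] (mod 3^n)"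
    by (intro cong_sum) (auto simp: cong_0_iff intro!: dvd_mult le_imp_power_dvd)
  also have "(\<Sum>i<n. \<Sum>j<n. \<Sum>l<n. if i+j+l < n then x i * x j * x l * 3^(i+j+l) else 0) =
       (\<Sum>i<n. \<Sum>j<n. \<Sum>l<n. \<Sum>k<n. if i+j+l = k then x i * x j * x l * 3^k else 0)"
    by (simp add: sum.delta' cong: if_cong)
  also have "\<dots> = (\<Sum>k<n. \<Sum>i<n. \<Sum>j<n. \<Sum>l<n. if i+j+l = k then x i * x j * x l * 3^k else 0)"
    by (rule swap4)
  also have "\<dots> = (\<Sum>k<n. tri x k * 3^k)"
    by (auto simp: tri_ext sum_distrib_right intro!: sum.cong)
  finally show ?thesis .
qed

lemma K2: "[trunc3 a n * trunc3 x n = (\<Sum>k<n. conv3 a x k * 3^k)] (mod 3^n)"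
proof -
  have "trunc3 a n * trunc3 x n = (\<Sum>i<n. \<Sum>j<n. a i * x j * 3^(i+j))"
    unfolding trunc3_def sum_product
    by (simp add: power_add algebra_simps)
  also have "[\<dots> = (\<Sum>i<n. \<Sum>j<n. if i+j < n then a i * x j * 3^(i+j) else 0)] (mod 3^n)"
    by (intro cong_sum) (auto simp: cong_0_iff intro!: dvd_mult le_imp_power_dvd)
  also have "(\<Sum>i<n. \<Sum>j<n. if i+j < n then a i * x j * 3^(i+j) else 0) =
       (\<Sum>i<n. \<Sum>j<n. \<Sum>k<n. if i+j = k then a i * x j * 3^k else 0)"
    by (simp add: sum.delta' cong: if_cong)
  also have "\<dots> = (\<Sum>k<n. \<Sum>i<n. \<Sum>j<n. if i+j = k then a i * x j * 3^k else 0)"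
    by (rule swap3)
  also have "\<dots> = (\<Sum>k<n. conv3 a x k * 3^k)"
    by (rule sum.cong[OF refl]) (auto simp: conv_ext sum_distrib_right intro!: sum.cong)
  finally show ?thesis .
qed

lemma shift_sum:
  "(\<Sum>k<n+m. (if m \<le> k then tri x (k-m) else 0) * 3^k) = 3^m * (\<Sum>k<n. tri x k * (3::int)^k)"
proof (induction n)
  case 0
  then show ?case by simp
next
  case (Suc n)
  have "n + m - m = n" by simp
  then show ?case using Suc by (simp add: algebra_simps power_add)
qed

lemma tele:
  fixes w g :: "nat \<Rightarrow> int"
  assumes "\<And>k. g (Suc k) = w k" "g 0 = 0"
  shows "(\<Sum>k<n. (3 * w k - g k) * 3^k) = 3^n * g n"
  by (induction n) (simp_all add: assms algebra_simps)

lemma K3: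
  "[3^m * (\<Sum>k<n. tri x k * 3^k) = (\<Sum>k<n. (Slhs m a x k - conv3 a x k) * 3^k)] (mod 3^n)"
proof -
  define u where "u k = (if m \<le> k then tri x (k-m) else 0)" for k
  define w where "w k = (if m+1 \<le> k then x 0 ^ 2 * x (k-m) else 0)" for k
  define g where "g k = (if m+2 \<le> k then x 0 ^ 2 * x (k-m-1) else 0)" for k
  have gw: "g (Suc k) = w k" for k by (simp add: g_def w_def)
  have pt: "u k = (Slhs m a x k - conv3 a x k) + (3 * w k - g k)" for k
  proof -
    consider "k < m" | "k = m" | "k = m + 1" | "k \<ge> m + 2" by linarith
    then show ?thesis
    proof cases
      case 1 then show ?thesis by (simp add: u_def w_def g_def Slhs_def)
    next
      case 2 then show ?thesis by (simp add: u_def w_def g_def Slhs_def tri_0)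
    next
      case 3 then show ?thesis using tri_Npoly[of 1 x] by (simp add: u_def w_def g_def Slhs_def Npoly_Suc0)
    next
      case 4
      then have "k - m \<ge> 1" by simp
      from tri_Npoly[OF this, of x] 4 show ?thesis
        by (simp add: u_def w_def g_def Slhs_def)
    qed
  qed
  have "3^m * (\<Sum>k<n. tri x k * 3^k) = (\<Sum>k<n+m. u k * 3^k)"
    unfolding u_def by (rule shift_sum[symmetric])
  also have "[\<dots> = (\<Sum>k<n. u k * 3^k)] (mod 3^n)" by (rule tail_cong)
  also have "(\<Sum>k<n. u k * 3^k) = (\<Sum>k<n. (Slhs m a x k - conv3 a x k) * 3^k) + (\<Sum>k<n. (3 * w k - g k) * 3^k)"
    by (simp only: pt distrib_right sum.distrib)
  also have "\<dots> = (\<Sum>k<n. (Slhs m a x k - conv3 a x k) * 3^k) + 3^n * g n"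
    using tele[of g w, OF gw] by (simp add: g_def)
  also have "[\<dots> = (\<Sum>k<n. (Slhs m a x k - conv3 a x k) * 3^k)] (mod 3^n)"
    by (simp add: cong_iff_dvd_diff)
  finally show ?thesis .
qed

lemma Kmain:
  "[3^m * trunc3 x n ^ 3 + trunc3 a n * trunc3 x n = (\<Sum>k<n. Slhs m a x k * 3^k)] (mod 3^n)"
proof -
  have "[3^m * trunc3 x n ^ 3 + trunc3 a n * trunc3 x n =
        3^m * (\<Sum>k<n. tri x k * 3^k) + (\<Sum>k<n. conv3 a x k * 3^k)] (mod 3^n)"
    by (intro cong_add cong_mult cong_refl K1 K2)
  also have "[3^m * (\<Sum>k<n. tri x k * 3^k) + (\<Sum>k<n. conv3 a x k * 3^k) =
        (\<Sum>k<n. (Slhs m a x k - conv3 a x k) * 3^k) + (\<Sum>k<n. conv3 a x k * 3^k)] (mod 3^n)"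
    by (intro cong_add K3 cong_refl)
  also have "(\<Sum>k<n. (Slhs m a x k - conv3 a x k) * 3^k) + (\<Sum>k<n. conv3 a x k * 3^k) = (\<Sum>k<n. Slhs m a x k * 3^k)"
    by (simp add: sum.distrib[symmetric] algebra_simps)
  finally show ?thesis .
qed

lemma carry:
  "(\<Sum>k<n. (Slhs m a x k - b k) * 3^k) = 3^n * Mcarry m a b x n +
     (\<Sum>k<n. ((Slhs m a x k - b k + Mcarry m a b x k) mod 3) * 3^k)"
proof (induction n)
  case (Suc n)
  define D where "D = Slhs m a x n - b n + Mcarry m a b x n"
  define R where "R = (\<Sum>k<n. ((Slhs m a x k - b k + Mcarry m a b x k) mod 3) * (3::int)^k)"
  have M: "Mcarry m a b x (Suc n) = D div 3" by (simp add: D_def)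
  have d: "D = 3 * (D div 3) + D mod 3" by simp
  have l: "(\<Sum>k<Suc n. (Slhs m a x k - b k) * 3^k) = 3^n * Mcarry m a b x n + R + (Slhs m a x n - b n) * 3^n"
    using Suc.IH by (simp add: R_def)
  have r: "(\<Sum>k<Suc n. ((Slhs m a x k - b k + Mcarry m a b x k) mod 3) * 3^k) = R + (D mod 3) * 3^n"
    by (simp add: R_def D_def)
  have "3^n * D = 3^n * (3 * (D div 3)) + 3^n * (D mod 3)" using d by (metis distrib_left)
  then show ?case unfolding l r M by (simp add: D_def algebra_simps)
qed simp

lemma digsum_bound:
  assumes "\<And>k. 0 \<le> r k \<and> r k \<le> (2::int)"
  shows "0 \<le> (\<Sum>k<n. r k * 3^k) \<and> (\<Sum>k<n. r k * 3^k) < 3^n"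
proof (induction n)
  case (Suc n)
  have "r n * 3^n \<le> 2 * 3^n" using assms[of n] by (intro mult_right_mono) auto
  moreover have "0 \<le> r n * 3^n" using assms[of n] by simp
  moreover have "(\<Sum>k<Suc n. r k*3^k) = (\<Sum>k<n. r k*3^k) + r n * 3^n" by simp
  moreover have "(3::int)^Suc n = 3*3^n" by simp
  ultimately show ?case using Suc by linarith
qed simp

theorem theorem3p3:
  fixes m :: nat and a b x :: "nat \<Rightarrow> int"
  assumes "m > 0"
    and "digits3 a" and "a 0 \<noteq> 0"
    and "digits3 b" and "b 0 \<noteq> 0"
    and "digits3 x" and "x 0 \<noteq> 0"
  shows "cubic_sol3 m a b x \<longleftrightarrow>
    (\<forall>k. [Slhs m a x k + Mcarry m a b x k = b k] (mod 3))"
proof -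
  define r where "r k = (Slhs m a x k - b k + Mcarry m a b x k) mod 3" for k
  define R where "R n = (\<Sum>k<n. r k * 3^k)" for n
  have rb: "0 \<le> r k \<and> r k \<le> 2" for k
    unfolding r_def by auto
  have key: "[3^m * trunc3 x n ^ 3 + trunc3 a n * trunc3 x n = trunc3 b n] (mod 3^n) \<longleftrightarrow> 3^n dvd R n" for n
  proof -
    have tb: "trunc3 b n = (\<Sum>k<n. b k * 3^k)" by (simp add: trunc3_def)
    have e: "(\<Sum>k<n. Slhs m a x k * 3^k) - trunc3 b n = 3^n * Mcarry m a b x n + R n"
      using carry[of m a x b n] by (simp add: tb R_def r_def sum_subtractf[symmetric] left_diff_distrib)
    have "[3^m * trunc3 x n ^ 3 + trunc3 a n * trunc3 x n = trunc3 b n] (mod 3^n) \<longleftrightarrow>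
          [(\<Sum>k<n. Slhs m a x k * 3^k) = trunc3 b n] (mod 3^n)"
      using Kmain[of m x n a] by (meson cong_sym cong_trans)
    also have "\<dots> \<longleftrightarrow> 3^n dvd R n"
      unfolding cong_iff_dvd_diff e by (simp add: dvd_add_right_iff)
    finally show ?thesis .
  qed
  have cond: "[Slhs m a x k + Mcarry m a b x k = b k] (mod 3) \<longleftrightarrow> r k = 0" for k
    by (simp add: r_def cong_iff_dvd_diff dvd_eq_mod_eq_0 algebra_simps)
  show ?thesis unfolding cubic_sol3_def key cond
  proof
    assume h: "\<forall>n. 3^n dvd R n"
    show "\<forall>k. r k = 0"
    proof
      fix k
      have bd: "0 \<le> R (Suc k) \<and> R (Suc k) < 3^Suc k" unfolding R_def by (rule digsum_bound[of r, OF rb])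
      have "R (Suc k) = 0"
      proof (rule ccontr)
        assume "R (Suc k) \<noteq> 0"
        then have "0 < R (Suc k)" using bd by simp
        from zdvd_imp_le[OF h[rule_format, of "Suc k"] this] bd show False by simp
      qed
      moreover have "R (Suc k) = R k + r k * 3^k" by (simp add: R_def)
      moreover have "0 \<le> R k" unfolding R_def using digsum_bound[of r, OF rb] by blast
      moreover have "0 \<le> r k" using rb by blast
      ultimately have "r k * 3^k = 0" by (smt (verit) zero_le_mult_iff zero_le_power)
      then show "r k = 0" by simp
    qed
  next
    assume "\<forall>k. r k = 0"
    then show "\<forall>n. 3^n dvd R n" by (simp add: R_def)
  qed
qed

end
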